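(* Let $n\ge2$ and let $(V,\langle-,\ldots,-\rangle_n)$ be an infinite-dimensional non-degenerate alternating (resp. symmetric) $n$-linear space over a field $K$, and let $U$ be a finite-dimensional subspace of $V$. Then for any linearly independent $t_1,\ldots,t_m\in\lozenge^{n-1}V$ and any $k_1,\ldots,k_m\in K$ there is $w\in V$, linearly independent from $U$, such that $\langle t_i,w\rangle_2=k_i$ for all $i\le m$.
   Context: $\lozenge^{n-1}V$ is $\bigwedge^{n-1}V$ (alternating case) or $\bigvee^{n-1}V$ (symmetric case); $\langle-,-\rangle_2$ is the induced bilinear form on $(\lozenge^{n-1}V)\times V$ with $\langle\overline{v_1\otimes\cdots\otimes v_{n-1}},v\rangle_2=\langle v_1,\ldots,v_{n-1},v\rangle_n$ extended linearly. Non-degenerate: for every nonzero $t\in\lozenge^{n-1}V$ there is $w\in V$ with $\langle t,w\rangle_2\ne0$. *)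

theory Defs
  imports Complex_Main
begin

text \<open>An n-linear form on V is modelled as a function on lists of vectors; only lists
  of length n are meaningful.  The scalar multiplication of V over the field K is scale.\<close>

definition multilinear_form :: "('k::field \<Rightarrow> 'v::ab_group_add \<Rightarrow> 'v) \<Rightarrow> nat \<Rightarrow> ('v list \<Rightarrow> 'k) \<Rightarrow> bool" where
  "multilinear_form scale n form \<longleftrightarrow>
     (\<forall>xs. length xs = n \<longrightarrow> (\<forall>i<n. \<forall>a x y.
        form (xs[i := scale a x + y]) = a * form (xs[i := x]) + form (xs[i := y])))"

definition alternating_form :: "nat \<Rightarrow> ('v list \<Rightarrow> 'k::field) \<Rightarrow> bool" where
  "alternating_form n form \<longleftrightarrow>
     (\<forall>xs. length xs = n \<longrightarrow> (\<forall>i<n. \<forall>j<n. i \<noteq> j \<and> xs ! i = xs ! j \<longrightarrow> form xs = 0))"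

definition symmetric_form :: "nat \<Rightarrow> ('v list \<Rightarrow> 'k::field) \<Rightarrow> bool" where
  "symmetric_form n form \<longleftrightarrow>
     (\<forall>xs. length xs = n \<longrightarrow> (\<forall>i<n. \<forall>j<n. form (xs[i := xs ! j, j := xs ! i]) = form xs))"

text \<open>Free vector space on lists of vectors: finitely supported functions 'v list => K.
  The basis vector of a list xs (the formal tensor xs_1 (x) ... (x) xs_d):\<close>

definition basis_vec :: "'v list \<Rightarrow> 'v list \<Rightarrow> 'k::field" where
  "basis_vec xs = (\<lambda>ys. if ys = xs then 1 else 0)"

definition formal_elem :: "nat \<Rightarrow> ('v list \<Rightarrow> 'k::field) \<Rightarrow> bool" where
  "formal_elem d t \<longleftrightarrow> finite {ys. t ys \<noteq> 0} \<and> (\<forall>ys. t ys \<noteq> 0 \<longrightarrow> length ys = d)"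

text \<open>The subspace of relations; the d-th exterior power (alt = True) resp. symmetric power
  (alt = False) of V is the quotient of the free vector space on length-d lists by it.\<close>

inductive_set lozenge_rel :: "('k::field \<Rightarrow> 'v::ab_group_add \<Rightarrow> 'v) \<Rightarrow> bool \<Rightarrow> nat \<Rightarrow> ('v list \<Rightarrow> 'k) set"
  for scale alt d where
  zero: "(\<lambda>_. 0) \<in> lozenge_rel scale alt d"
| add: "f \<in> lozenge_rel scale alt d \<Longrightarrow> g \<in> lozenge_rel scale alt d \<Longrightarrow>
          (\<lambda>ys. f ys + g ys) \<in> lozenge_rel scale alt d"
| smult: "f \<in> lozenge_rel scale alt d \<Longrightarrow> (\<lambda>ys. c * f ys) \<in> lozenge_rel scale alt d"
| lin: "length xs = d \<Longrightarrow> i < d \<Longrightarrow>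
          (\<lambda>ys. basis_vec (xs[i := scale a x + y]) ys - a * basis_vec (xs[i := x]) ys
                 - basis_vec (xs[i := y]) ys) \<in> lozenge_rel scale alt d"
| alt: "alt \<Longrightarrow> length xs = d \<Longrightarrow> i < d \<Longrightarrow> j < d \<Longrightarrow> i \<noteq> j \<Longrightarrow> xs ! i = xs ! j \<Longrightarrow>
          basis_vec xs \<in> lozenge_rel scale alt d"
| sym: "\<not> alt \<Longrightarrow> length xs = d \<Longrightarrow> i < d \<Longrightarrow> j < d \<Longrightarrow>
          (\<lambda>ys. basis_vec xs ys - basis_vec (xs[i := xs ! j, j := xs ! i]) ys) \<in> lozenge_rel scale alt d"

text \<open>Induced bilinear form <t, w>_2, evaluated on a representative t.\<close>

definition pair2 :: "('v list \<Rightarrow> 'k::field) \<Rightarrow> ('v list \<Rightarrow> 'k) \<Rightarrow> 'v \<Rightarrow> 'k" where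
  "pair2 form t w = (\<Sum>ys \<in> {ys. t ys \<noteq> 0}. t ys * form (ys @ [w]))"

definition nondegenerate :: "('k::field \<Rightarrow> 'v::ab_group_add \<Rightarrow> 'v) \<Rightarrow> bool \<Rightarrow> nat \<Rightarrow> ('v list \<Rightarrow> 'k) \<Rightarrow> bool" where
  "nondegenerate scale alt n form \<longleftrightarrow>
     (\<forall>t. formal_elem (n - 1) t \<and> t \<notin> lozenge_rel scale alt (n - 1) \<longrightarrow> (\<exists>w. pair2 form t w \<noteq> 0))"

definition lozenge_indep :: "('k::field \<Rightarrow> 'v::ab_group_add \<Rightarrow> 'v) \<Rightarrow> bool \<Rightarrow> nat \<Rightarrow> nat \<Rightarrow> (nat \<Rightarrow> 'v list \<Rightarrow> 'k) \<Rightarrow> bool" where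
  "lozenge_indep scale alt d m t \<longleftrightarrow>
     (\<forall>c. (\<lambda>ys. \<Sum>i<m. c i * t i ys) \<in> lozenge_rel scale alt d \<longrightarrow> (\<forall>i<m. c i = 0))"

end

theory Submission
  imports Defs
begin

context vector_space
begin

lemma fun_sum_lin:
  fixes f :: "'b \<Rightarrow> 'a"
  assumes add: "\<And>x y. f (x + y) = f x + f y"
    and smul: "\<And>a x. f (a *s x) = a * f x"
  shows "f (sum g A) = (\<Sum>a\<in>A. f (g a))"
proof (induction A rule: infinite_finite_induct)
  case (infinite A)
  have "f 0 + f 0 = f 0 + 0" using add[of 0 0] by simp
  then have "f 0 = 0" by (simp only: add_left_cancel)
  then show ?case using infinite by simp
next
  case empty
  have "f 0 + f 0 = f 0 + 0" using add[of 0 0] by simp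
  then have "f 0 = 0" by (simp only: add_left_cancel)
  then show ?case by simp
next
  case (insert x F)
  then show ?case using add by simp
qed

lemma fun_diff_lin:
  fixes f :: "'b \<Rightarrow> 'a"
  assumes add: "\<And>x y. f (x + y) = f x + f y"
  shows "f (x - y) = f x - f y"
proof -
  have "f x = f ((x - y) + y)" by simp
  also have "\<dots> = f (x - y) + f y" using add by blast
  finally show ?thesis by simp
qed

lemma dual_solve:
  fixes m :: nat and L :: "nat \<Rightarrow> 'b \<Rightarrow> 'a"
  assumes add: "\<And>i x y. L i (x + y) = L i x + L i y"
    and smul: "\<And>i a x. L i (a *s x) = a * L i x"
    and P: "\<And>c. (\<exists>j<m. c j \<noteq> 0) \<Longrightarrow> \<exists>w. (\<Sum>i<m. c i * L i w) \<noteq> 0"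
  shows "\<exists>w. \<forall>i<m. L i w = k i"
  using P
proof (induction m arbitrary: k)
  case 0
  then show ?case by simp
next
  case (Suc m)
  have Pm: "\<exists>w. (\<Sum>i<m. c i * L i w) \<noteq> 0" if "\<exists>j<m. c j \<noteq> 0" for c
  proof -
    from that have "\<exists>j<Suc m. (c(m := 0)) j \<noteq> 0" by auto
    from Suc.prems[OF this] obtain w where "(\<Sum>i<Suc m. (c(m := 0)) i * L i w) \<noteq> 0" by blast
    moreover have "(\<Sum>i<Suc m. (c(m := 0)) i * L i w) = (\<Sum>i<m. c i * L i w)"
      by (simp add: lessThan_Suc)
    ultimately show ?thesis by auto
  qed
  note IH = Suc.IH[OF Pm]
  define u where "u j = (SOME w. \<forall>i<m. L i w = (if i = j then 1 else 0))" for j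
  have u: "\<forall>i<m. L i (u j) = (if i = j then 1 else 0)" for j
    unfolding u_def using IH[of "\<lambda>i. if i = j then 1 else 0"] by (rule someI_ex)
  have "\<exists>z. (\<forall>i<m. L i z = 0) \<and> L m z \<noteq> 0"
  proof (rule ccontr)
    assume na: "\<not> ?thesis"
    define c where "c i = (if i = m then 1 else - L m (u i))" for i
    have "\<exists>j<Suc m. c j \<noteq> 0" by (rule exI[of _ m]) (simp add: c_def)
    from Suc.prems[OF this] obtain w where w: "(\<Sum>i<Suc m. c i * L i w) \<noteq> 0" by blast
    define z where "z = w - (\<Sum>j<m. L j w *s u j)"
    have Lz: "L i z = L i w - (\<Sum>j<m. L j w * L i (u j))" for i
    proof -
      have "L i (\<Sum>j<m. L j w *s u j) = (\<Sum>j<m. L i (L j w *s u j))"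
        by (rule fun_sum_lin) (use add smul in auto)
      then show ?thesis unfolding z_def fun_diff_lin[of "L i", OF add] by (simp add: smul)
    qed
    have "\<forall>i<m. L i z = 0"
    proof (intro allI impI)
      fix i assume "i < m"
      then have "(\<Sum>j<m. L j w * L i (u j)) = (\<Sum>j<m. if j = i then L j w else 0)"
        using u by (intro sum.cong) auto
      also have "\<dots> = L i w" using \<open>i < m\<close> by (simp add: sum.delta)
      finally show "L i z = 0" using Lz by simp
    qed
    with na have "L m z = 0" by blast
    then have "L m w = (\<Sum>j<m. L j w * L m (u j))" using Lz[of m] by simp
    moreover have "(\<Sum>i<Suc m. c i * L i w) = L m w - (\<Sum>j<m. L j w * L m (u j))"
      by (simp add: lessThan_Suc c_def sum_negf mult.commute)
    ultimately show False using w by simp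
  qed
  then obtain z where z0: "\<forall>i<m. L i z = 0" and z1: "L m z \<noteq> 0" by blast
  obtain w0 where w0: "\<forall>i<m. L i w0 = k i" using IH by blast
  define w where "w = w0 + ((k m - L m w0) / L m z) *s z"
  have "\<forall>i<Suc m. L i w = k i"
  proof (intro allI impI)
    fix i assume "i < Suc m"
    then consider "i < m" | "i = m" by linarith
    then show "L i w = k i"
    proof cases
      case 1 then show ?thesis using w0 z0 by (simp add: w_def add smul)
    next
      case 2 then show ?thesis using z1 by (simp add: w_def add smul)
    qed
  qed
  then show ?case by blast
qed

lemma kernel_not_in:
  fixes m :: nat and L :: "nat \<Rightarrow> 'b \<Rightarrow> 'a"
  assumes add: "\<And>i x y. L i (x + y) = L i x + L i y"
    and smul: "\<And>i a x. L i (a *s x) = a * L i x"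
    and P: "\<And>c. (\<exists>j<m. c j \<noteq> 0) \<Longrightarrow> \<exists>w. (\<Sum>i<m. c i * L i w) \<noteq> 0"
    and inf: "\<not> (\<exists>B. finite B \<and> span B = UNIV)"
    and B: "finite B"
  shows "\<exists>z. (\<forall>i<m. L i z = 0) \<and> z \<notin> span B"
proof (rule ccontr)
  assume na: "\<not> ?thesis"
  define u where "u j = (SOME w. \<forall>i<m. L i w = (if i = j then 1 else 0))" for j
  have u: "\<forall>i<m. L i (u j) = (if i = j then 1 else 0)" for j
    unfolding u_def using dual_solve[OF add smul P, of "\<lambda>i. if i = j then 1 else 0"]
    by (rule someI_ex)
  let ?S = "B \<union> u ` {..<m}"
  have "v \<in> span ?S" for v
  proof -
    define z where "z = v - (\<Sum>j<m. L j v *s u j)"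
    have Lz: "L i z = L i v - (\<Sum>j<m. L j v * L i (u j))" for i
    proof -
      have "L i (\<Sum>j<m. L j v *s u j) = (\<Sum>j<m. L i (L j v *s u j))"
        by (rule fun_sum_lin) (use add smul in auto)
      then show ?thesis unfolding z_def fun_diff_lin[of "L i", OF add] by (simp add: smul)
    qed
    have "\<forall>i<m. L i z = 0"
    proof (intro allI impI)
      fix i assume "i < m"
      then have "(\<Sum>j<m. L j v * L i (u j)) = (\<Sum>j<m. if j = i then L j v else 0)"
        using u by (intro sum.cong) auto
      also have "\<dots> = L i v" using \<open>i < m\<close> by (simp add: sum.delta)
      finally show "L i z = 0" using Lz by simp
    qed
    with na have "z \<in> span B" by blast
    then have "z \<in> span ?S" using span_mono[of B ?S] by blast
    moreover have "(\<Sum>j<m. L j v *s u j) \<in> span ?S"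
      by (intro span_sum span_scale span_base) auto
    ultimately have "z + (\<Sum>j<m. L j v *s u j) \<in> span ?S" by (rule span_add)
    then show ?thesis by (simp add: z_def)
  qed
  then have "span ?S = UNIV" by blast
  moreover have "finite ?S" using B by simp
  ultimately show False using inf by blast
qed

end

lemma pair2_sup:
  assumes "finite S" "{ys. t ys \<noteq> 0} \<subseteq> S"
  shows "pair2 form t w = (\<Sum>ys\<in>S. t ys * form (ys @ [w]))"
  unfolding pair2_def
  by (rule sum.mono_neutral_left) (use assms in auto)

theorem lemma2p9:
  fixes scale :: "'k::field \<Rightarrow> 'v::ab_group_add \<Rightarrow> 'v"
    and alt :: bool and n m :: nat and form :: "'v list \<Rightarrow> 'k"
    and U :: "'v set" and t :: "nat \<Rightarrow> 'v list \<Rightarrow> 'k" and k :: "nat \<Rightarrow> 'k"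
  assumes "vector_space scale"
    and "n \<ge> 2"
    and "multilinear_form scale n form"
    and "if alt then alternating_form n form else symmetric_form n form"
    and "nondegenerate scale alt n form"
    and "\<not> (\<exists>B. finite B \<and> module.span scale B = UNIV)"
    and "module.subspace scale U"
    and "\<exists>B. finite B \<and> module.span scale B = U"
    and "\<forall>i<m. formal_elem (n - 1) (t i)"
    and "lozenge_indep scale alt (n - 1) m t"
  shows "\<exists>w. w \<notin> U \<and> (\<forall>i<m. pair2 form (t i) w = k i)"
proof -
  interpret vs: vector_space scale by (rule assms(1))
  define L where "L i w = pair2 form (t i) w" for i w
  have fe: "finite {ys. t i ys \<noteq> 0}" "\<And>ys. t i ys \<noteq> 0 \<Longrightarrow> length ys = n - 1" if "i < m" for i
    using assms(9) that unfolding formal_elem_def by auto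
  have H: "\<And>xs i a x y. length xs = n \<Longrightarrow> i < n \<Longrightarrow>
      form (xs[i := scale a x + y]) = a * form (xs[i := x]) + form (xs[i := y])"
    using assms(3) unfolding multilinear_form_def by blast
  have ml: "form (ys @ [scale a x + y]) = a * form (ys @ [x]) + form (ys @ [y])"
    if "length ys = n - 1" for ys a x y
  proof -
    have len: "length (ys @ [x]) = n" using that assms(2) by simp
    have lt: "n - 1 < n" using assms(2) by simp
    from H[OF len lt, of a x y] show ?thesis using that by (simp add: list_update_append)
  qed
  have f1: "form (ys @ [x + y]) = form (ys @ [x]) + form (ys @ [y])" if "length ys = n - 1" for ys x y
    using ml[OF that, of 1 x y] by simp
  have f2: "form (ys @ [scale a x]) = a * form (ys @ [x])" if "length ys = n - 1" for ys a x
  proof -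
    have "form (ys @ [0]) + form (ys @ [0]) = form (ys @ [0]) + 0" using f1[OF that, of 0 0] by simp
    then have "form (ys @ [0]) = 0" by (simp only: add_left_cancel)
    then show ?thesis using ml[OF that, of a x 0] by simp
  qed
  define L where "L i w = (if i < m then pair2 form (t i) w else 0)" for i w
  have addL: "L i (x + y) = L i x + L i y" for i x y
  proof (cases "i < m")
    case True
    have "pair2 form (t i) (x + y) = (\<Sum>ys\<in>{ys. t i ys \<noteq> 0}. t i ys * form (ys @ [x]) + t i ys * form (ys @ [y]))"
      unfolding pair2_def using fe(2)[OF True] f1 by (intro sum.cong) (auto simp: distrib_left)
    then show ?thesis using True by (simp add: L_def pair2_def sum.distrib)
  qed (simp add: L_def)
  have smulL: "L i (scale a x) = a * L i x" for i a x
  proof (cases "i < m")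
    case True
    have "pair2 form (t i) (scale a x) = (\<Sum>ys\<in>{ys. t i ys \<noteq> 0}. a * (t i ys * form (ys @ [x])))"
      unfolding pair2_def using fe(2)[OF True] f2 by (intro sum.cong) (auto simp: ac_simps)
    then show ?thesis using True by (simp add: L_def pair2_def sum_distrib_left)
  qed (simp add: L_def)
  have P: "\<exists>w. (\<Sum>i<m. c i * L i w) \<noteq> 0" if "\<exists>j<m. c j \<noteq> 0" for c
  proof -
    define s where "s ys = (\<Sum>i<m. c i * t i ys)" for ys
    define S where "S = (\<Union>i<m. {ys. t i ys \<noteq> 0})"
    have finS: "finite S" unfolding S_def using fe(1) by auto
    have suppS: "{ys. s ys \<noteq> 0} \<subseteq> S"
    proof
      fix ys assume "ys \<in> {ys. s ys \<noteq> 0}"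
      then have "(\<Sum>i<m. c i * t i ys) \<noteq> 0" by (simp add: s_def)
      then obtain i where "i < m" "c i * t i ys \<noteq> 0" by (meson sum.neutral lessThan_iff)
      then show "ys \<in> S" unfolding S_def by auto
    qed
    have fes: "formal_elem (n - 1) s"
      unfolding formal_elem_def
    proof
      show "finite {ys. s ys \<noteq> 0}" using finS suppS finite_subset by blast
      show "\<forall>ys. s ys \<noteq> 0 \<longrightarrow> length ys = n - 1"
      proof (intro allI impI)
        fix ys assume "s ys \<noteq> 0"
        then have "(\<Sum>i<m. c i * t i ys) \<noteq> 0" by (simp add: s_def)
        then obtain i where "i < m" "c i * t i ys \<noteq> 0" by (meson sum.neutral lessThan_iff)
        then show "length ys = n - 1" using fe(2) by auto
      qed
    qed
    have "s \<notin> lozenge_rel scale alt (n - 1)"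
    proof
      assume "s \<in> lozenge_rel scale alt (n - 1)"
      then have "(\<lambda>ys. \<Sum>i<m. c i * t i ys) \<in> lozenge_rel scale alt (n - 1)"
        by (simp add: s_def[abs_def])
      with assms(10) have "\<forall>i<m. c i = 0" unfolding lozenge_indep_def by blast
      with that show False by blast
    qed
    with fes assms(5) obtain w where w: "pair2 form s w \<noteq> 0"
      unfolding nondegenerate_def by blast
    have "pair2 form s w = (\<Sum>ys\<in>S. s ys * form (ys @ [w]))"
      by (rule pair2_sup[OF finS suppS])
    also have "\<dots> = (\<Sum>i<m. c i * (\<Sum>ys\<in>S. t i ys * form (ys @ [w])))"
      unfolding s_def sum_distrib_right sum_distrib_left
      by (subst sum.swap) (simp add: ac_simps)
    also have "\<dots> = (\<Sum>i<m. c i * L i w)"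
    proof (intro sum.cong refl)
      fix i assume "i \<in> {..<m}"
      then have im: "i < m" by simp
      have "{ys. t i ys \<noteq> 0} \<subseteq> S" unfolding S_def using im by auto
      then show "c i * (\<Sum>ys\<in>S. t i ys * form (ys @ [w])) = c i * L i w"
        using pair2_sup[OF finS, of "t i" form w] im by (simp add: L_def)
    qed
    finally show ?thesis using w by metis
  qed
  obtain B where B: "finite B" "module.span scale B = U" using assms(8) by blast
  obtain z where z: "\<forall>i<m. L i z = 0" "z \<notin> U"
    using vs.kernel_not_in[OF addL smulL P assms(6) B(1)] B(2) by blast
  obtain w0 where w0: "\<forall>i<m. L i w0 = k i"
    using vs.dual_solve[OF addL smulL P] by blast
  show ?thesis
  proof (cases "w0 \<in> U")
    case False
    then show ?thesis using w0 by (auto simp: L_def)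
  next
    case True
    have "w0 + z \<notin> U"
    proof
      assume "w0 + z \<in> U"
      then have "(w0 + z) - w0 \<in> U" using True B(2) vs.span_diff by blast
      then show False using z(2) by simp
    qed
    moreover have "\<forall>i<m. pair2 form (t i) (w0 + z) = k i"
    proof (intro allI impI)
      fix i assume im: "i < m"
      have "L i (w0 + z) = k i" using w0 z(1) addL[of i w0 z] im by simp
      then show "pair2 form (t i) (w0 + z) = k i" using im by (simp add: L_def)
    qed
    ultimately show ?thesis by blast
  qed
qed

end
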